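(* Assume the standing assumptions (A1)–(A4). If $\rho> L_0/\beta$, then for all $p\in\mathbb R^{n_p}$ $$\psi(p)\le \frac{L_\psi}{2}\Bigl[d(p)+\frac{\kappa_0}{\sqrt\rho}\Bigr]^2,\qquad \kappa_0:=\frac{2L_0}{\beta}\sqrt{\frac{2}{\mu_0}\psi(p_u)} .$$ In particular $\psi(p^* )\le \dfrac{L_\psi\kappa_0^2}{2\rho}$.
   Context: Let $n_p,n_c\ge 1$, let $f_0:\mathbb R^{n_p}\to\mathbb R$ and $c_i:\mathbb R^{n_p}\to\mathbb R$ ($i=1,\dots,n_c$) be continuously differentiable, and let $\{1,\dots,n_c\}=I_s\cup I_h$ be a partition into disjoint sets of soft and hard constraint indices. The original problem is $\min_{p\in\mathbb R^{n_p}} f_0(p)$ subject to $c_i(p)\le 0$ for all $i$; $f^{opt}$ denotes its optimal value and $p^{opt}$ an optimal solution (assumed to exist). For a fixed $\varepsilon_\psi>0$ let $\psi(p):=\sum_{i\in I_s}[\max\{0,c_i(p)\}]^2+\sum_{i\in I_h}[\max\{0,c_i(p)+\varepsilon_\psi\}]^2$, and for a penalty parameter $\rho>0$ let $f(p):=f_0(p)+\rho\,\psi(p)$. A differentiable function $\ell$ belongs to $\mathcal F^1_L$ if $\ell(p_2)\le \ell(p_1)+\langle \ell'(p_1),p_2-p_1\rangle+\frac L2\|p_2-p_1\|^2$ for all $p_1,p_2$, and is $\mu$-strongly convex if $\ell(p_2)\ge \ell(p_1)+\langle \ell'(p_1),p_2-p_1\rangle+\frac \mu2\|p_2-p_1\|^2$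 for all $p_1,p_2$. Standing assumptions: (A1) $f_0(p)\ge 0$ for all $p$; (A2) $f_0\in\mathcal F^1_{L_0}$ and $\psi\in\mathcal F^1_{L_\psi}$ for some reals $L_0,L_\psi\ge 0$; (A3) $f_0$ is $\mu_0$-strongly convex for some $\mu_0>0$, and $\psi$ is convex; (A4) the set $\mathcal A:=\{p:\psi(p)=0\}$ is nonempty and there is $\beta>0$ with $\psi(p)\ge \beta\,[d(p,\mathcal A)]^2$ for all $p$, where $d(p,\mathcal A):=\min_{z\in\mathcal A}\|z-p\|$. Notation: $\|\cdot\|$ is the Euclidean norm; $p^*$ is the unique minimizer of $f$ over $\mathbb R^{n_p}$; $p_u$ is the unique unconstrained minimizer of $f_0$; $p_a$ is a fixed point with $\psi(p_a)=0$; $D_0:=\sup\{\|f_0'(p)\|:\ f_0(p)\le f_0(p_a)\}$; $d(p):=\|p-p^*\|$. *)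

theory Defs
  imports "HOL-Analysis.Analysis"
begin

definition F1L :: "('a::real_inner \<Rightarrow> real) \<Rightarrow> real \<Rightarrow> bool" where
  "F1L l L \<longleftrightarrow> (\<exists>grad. (\<forall>p. (l has_derivative (\<lambda>h. grad p \<bullet> h)) (at p)) \<and>
      (\<forall>p1 p2. l p2 \<le> l p1 + grad p1 \<bullet> (p2 - p1) + L / 2 * (norm (p2 - p1))\<^sup>2))"

definition strongly_convex :: "('a::real_inner \<Rightarrow> real) \<Rightarrow> real \<Rightarrow> bool" where
  "strongly_convex l \<mu> \<longleftrightarrow> (\<exists>grad. (\<forall>p. (l has_derivative (\<lambda>h. grad p \<bullet> h)) (at p)) \<and>
      (\<forall>p1 p2. l p2 \<ge> l p1 + grad p1 \<bullet> (p2 - p1) + \<mu> / 2 * (norm (p2 - p1))\<^sup>2))"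

definition C1 :: "('a::real_normed_vector \<Rightarrow> real) \<Rightarrow> bool" where
  "C1 g \<longleftrightarrow> (\<exists>D. (\<forall>p. (g has_derivative blinfun_apply (D p)) (at p)) \<and> continuous_on UNIV D)"

definition penalty :: "nat set \<Rightarrow> nat set \<Rightarrow> (nat \<Rightarrow> 'a \<Rightarrow> real) \<Rightarrow> real \<Rightarrow> 'a \<Rightarrow> real" where
  "penalty Is Ih c eps p = (\<Sum>i\<in>Is. (max 0 (c i p))\<^sup>2) + (\<Sum>i\<in>Ih. (max 0 (c i p + eps))\<^sup>2)"

end

theory Submission
  imports Defs
begin


lemma grad_zero_at_min:
  fixes g z :: "'a::real_inner"
  assumes up: "\<forall>p2. l p2 \<le> l z + g \<bullet> (p2 - z) + L / 2 * (norm (p2 - z))\<^sup>2"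
    and mn: "\<forall>p. l z \<le> l p" and L: "L \<ge> 0"
  shows "g = 0"
proof -
  define t where "t = 1 / (L + 1)"
  have t: "t > 0" "L * t \<le> 1" using L by (auto simp: t_def field_simps)
  have "l z \<le> l (z - t *\<^sub>R g)" using mn by auto
  also have "\<dots> \<le> l z + g \<bullet> ((z - t *\<^sub>R g) - z) + L / 2 * (norm ((z - t *\<^sub>R g) - z))\<^sup>2"
    using up by blast
  also have "\<dots> = l z - t * (norm g)\<^sup>2 + L / 2 * t\<^sup>2 * (norm g)\<^sup>2"
    using t by (simp add: power2_norm_eq_inner inner_diff_right power_mult_distrib)
  finally have "t * (norm g)\<^sup>2 \<le> L / 2 * t\<^sup>2 * (norm g)\<^sup>2" by simp
  hence "t * (norm g)\<^sup>2 * 1 \<le> t * (norm g)\<^sup>2 * (L * t / 2)" by (simp add: power2_eq_square algebra_simps)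
  moreover have "L * t / 2 < 1" using t by simp
  ultimately have "\<not> t * (norm g)\<^sup>2 > 0"
    by (metis mult_strict_left_mono not_less)
  hence "(norm g)\<^sup>2 \<le> 0" using t by (simp add: zero_less_mult_iff)
  thus ?thesis by simp
qed

lemma grad_bound:
  fixes g p pu :: "'a::real_inner"
  assumes up: "\<forall>p2. f p2 \<le> f p + g \<bullet> (p2 - p) + L / 2 * (norm (p2 - p))\<^sup>2"
    and mn: "\<forall>q. f pu \<le> f q" and L: "L > 0"
  shows "(norm g)\<^sup>2 \<le> 2 * L * (f p - f pu)"
proof -
  define t where "t = 1 / L"
  have "t > 0" using L by (simp add: t_def)
  have "f pu \<le> f (p - t *\<^sub>R g)" using mn by auto
  also have "\<dots> \<le> f p + g \<bullet> ((p - t *\<^sub>R g) - p) + L / 2 * (norm ((p - t *\<^sub>R g) - p))\<^sup>2"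
    using up by blast
  also have "\<dots> = f p - t * (norm g)\<^sup>2 + L / 2 * t\<^sup>2 * (norm g)\<^sup>2"
    using \<open>t > 0\<close> by (simp add: power2_norm_eq_inner inner_diff_right power_mult_distrib)
  also have "\<dots> = f p - (norm g)\<^sup>2 / (2 * L)"
    using L by (simp add: t_def power2_eq_square field_simps)
  finally show ?thesis using L by (simp add: field_simps)
qed

lemma mu_le_L:
  fixes f :: "'a::euclidean_space \<Rightarrow> real"
  assumes "F1L f L" "strongly_convex f \<mu>"
  shows "\<mu> \<le> L"
proof -
  obtain g1 where g1: "\<forall>p1 p2. f p2 \<le> f p1 + g1 p1 \<bullet> (p2 - p1) + L / 2 * (norm (p2 - p1))\<^sup>2"
    using assms(1) unfolding F1L_def by blast
  obtain g2 where g2: "\<forall>p1 p2. f p2 \<ge> f p1 + g2 p1 \<bullet> (p2 - p1) + \<mu> / 2 * (norm (p2 - p1))\<^sup>2"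
    using assms(2) unfolding strongly_convex_def by blast
  obtain b :: 'a where b: "b \<in> Basis" using nonempty_Basis by blast
  have nb: "norm b = 1" "norm (-b) = 1" using b by auto
  have a1: "f b \<le> f 0 + g1 0 \<bullet> (b - 0) + L / 2 * (norm (b - 0))\<^sup>2" using g1 by blast
  have a2: "f b \<ge> f 0 + g2 0 \<bullet> (b - 0) + \<mu> / 2 * (norm (b - 0))\<^sup>2" using g2 by blast
  have a3: "f (-b) \<le> f 0 + g1 0 \<bullet> (-b - 0) + L / 2 * (norm (-b - 0))\<^sup>2" using g1 by blast
  have a4: "f (-b) \<ge> f 0 + g2 0 \<bullet> (-b - 0) + \<mu> / 2 * (norm (-b - 0))\<^sup>2" using g2 by blast
  have "f 0 + g2 0 \<bullet> b + \<mu> / 2 \<le> f 0 + g1 0 \<bullet> b + L / 2"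
    using a1 a2 nb by simp
  moreover have "f 0 - g2 0 \<bullet> b + \<mu> / 2 \<le> f 0 - g1 0 \<bullet> b + L / 2"
    using a3 a4 nb by simp
  ultimately show ?thesis by linarith
qed

theorem lemma2:
  fixes f0 :: "real^'n \<Rightarrow> real"
    and c :: "nat \<Rightarrow> real^'n \<Rightarrow> real"
    and nc :: nat and Is Ih :: "nat set"
    and eps \<rho> L0 Lpsi \<mu>0 \<beta> :: real
    and pstar pu :: "real^'n"
  defines "\<psi> \<equiv> penalty Is Ih c eps"
  defines "\<A> \<equiv> {p. \<psi> p = 0}"
  assumes nc: "nc \<ge> 1"
    and partition: "Is \<union> Ih = {1..nc}" "Is \<inter> Ih = {}"
    and f0_C1: "C1 f0"
    and c_C1: "\<forall>i\<in>{1..nc}. C1 (c i)"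
    and opt_exists: "\<exists>popt. (\<forall>i\<in>{1..nc}. c i popt \<le> 0) \<and>
                       (\<forall>p. (\<forall>i\<in>{1..nc}. c i p \<le> 0) \<longrightarrow> f0 popt \<le> f0 p)"
    and eps_pos: "eps > 0"
    and rho_pos: "\<rho> > 0"
    and A1: "\<forall>p. f0 p \<ge> 0"
    and A2: "L0 \<ge> 0" "Lpsi \<ge> 0" "F1L f0 L0" "F1L \<psi> Lpsi"
    and A3: "\<mu>0 > 0" "strongly_convex f0 \<mu>0" "convex_on UNIV \<psi>"
    and A4: "\<A> \<noteq> {}" "\<beta> > 0" "\<forall>p. \<psi> p \<ge> \<beta> * (infdist p \<A>)\<^sup>2"
    and pstar_min: "\<forall>p. f0 pstar + \<rho> * \<psi> pstar \<le> f0 p + \<rho> * \<psi> p"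
    and pu_min: "\<forall>p. f0 pu \<le> f0 p"
    and rho_large: "\<rho> > L0 / \<beta>"
  shows "(\<forall>p. \<psi> p \<le> Lpsi / 2 *
            (norm (p - pstar) + (2 * L0 / \<beta> * sqrt (2 / \<mu>0 * \<psi> pu)) / sqrt \<rho>)\<^sup>2)
       \<and> \<psi> pstar \<le> Lpsi * (2 * L0 / \<beta> * sqrt (2 / \<mu>0 * \<psi> pu))\<^sup>2 / (2 * \<rho>)"
  proof -
  have psi_nn: "\<And>p. \<psi> p \<ge> 0" unfolding \<psi>_def penalty_def by (auto intro!: add_nonneg_nonneg sum_nonneg)
  have muL: "\<mu>0 \<le> L0" using mu_le_L[OF A2(3) A3(2)] .
  have L0pos: "L0 > 0" using muL A3(1) by linarith
  obtain gp where gp_der: "\<forall>p. (\<psi> has_derivative (\<lambda>h. gp p \<bullet> h)) (at p)"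
    and gp: "\<forall>p1 p2. \<psi> p2 \<le> \<psi> p1 + gp p1 \<bullet> (p2 - p1) + Lpsi / 2 * (norm (p2 - p1))\<^sup>2"
    using A2(4) unfolding F1L_def by blast
  obtain gf where gf: "\<forall>p1 p2. f0 p2 \<le> f0 p1 + gf p1 \<bullet> (p2 - p1) + L0 / 2 * (norm (p2 - p1))\<^sup>2"
    using A2(3) unfolding F1L_def by blast
  have cont: "continuous_on UNIV \<psi>"
    using gp_der by (intro has_derivative_continuous_on) (auto simp: has_derivative_at_withinI)
  have clA: "closed \<A>" unfolding \<A>_def
    using closed_Collect_eq[of \<psi> "\<lambda>_. 0"] cont by auto
  obtain z where zA: "z \<in> \<A>" and zmin: "\<And>y. y \<in> \<A> \<Longrightarrow> dist pstar z \<le> dist pstar y"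
    using distance_attains_inf[OF clA A4(1)] by blast
  have dz: "infdist pstar \<A> = dist pstar z"
  proof (rule antisym)
    show "infdist pstar \<A> \<le> dist pstar z" using infdist_le[OF zA] .
    show "dist pstar z \<le> infdist pstar \<A>" unfolding infdist_notempty[OF A4(1)]
      using zmin A4(1) by (auto intro!: cINF_greatest)
  qed
  have psiz: "\<psi> z = 0" using zA unfolding \<A>_def by simp
  define d where "d = norm (z - pstar)"
  have d_eq: "infdist pstar \<A> = d" unfolding d_def dz by (simp add: dist_norm norm_minus_commute)
  have d_nn: "d \<ge> 0" unfolding d_def by simp
  define \<kappa> where "\<kappa> = 2 * L0 / \<beta> * sqrt (2 / \<mu>0 * \<psi> pu)"
  define K where "K = \<kappa> / sqrt \<rho>"
  have kap_nn: "\<kappa> \<ge> 0" unfolding \<kappa>_def using L0pos A4(2) A3(1) psi_nn[of pu] by auto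
  have K_nn: "K \<ge> 0" unfolding K_def using kap_nn rho_pos by simp
  have gz: "gp z = 0"
  proof (rule grad_zero_at_min[of \<psi> z "gp z" Lpsi])
    show "\<forall>p2. \<psi> p2 \<le> \<psi> z + gp z \<bullet> (p2 - z) + Lpsi / 2 * (norm (p2 - z))\<^sup>2"
      using gp by blast
    show "\<forall>p. \<psi> z \<le> \<psi> p" using psiz psi_nn by simp
  qed (rule A2(2))
  have psi_bound: "\<And>p. \<psi> p \<le> Lpsi / 2 * (norm (p - z))\<^sup>2"
    using gp psiz gz by (metis add_0 inner_zero_left)
  define G where "G = norm (gf pstar)"
  have G2: "G\<^sup>2 \<le> 2 * L0 * (f0 pstar - f0 pu)"
    unfolding G_def using grad_bound[of f0 pstar "gf pstar" L0 pu] gf pu_min L0pos by auto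
  have fdiff: "f0 pstar - f0 pu \<le> \<rho> * \<psi> pu"
  proof -
    have "\<rho> * \<psi> pstar \<ge> 0" using psi_nn[of pstar] rho_pos by simp
    thus ?thesis using pstar_min[rule_format, of pu] by linarith
  qed
  have "2 * L0 * (f0 pstar - f0 pu) \<le> 2 * L0 * (\<rho> * \<psi> pu)"
    using fdiff L0pos by (intro mult_left_mono) auto
  hence G2': "G\<^sup>2 \<le> 2 * L0 * (\<rho> * \<psi> pu)" using G2 by linarith
  have "\<rho> * (\<beta> * d\<^sup>2) \<le> \<rho> * \<psi> pstar"
    using A4(3)[rule_format, of pstar] d_eq rho_pos by simp
  also have "\<dots> \<le> f0 z - f0 pstar"
    using pstar_min[rule_format, of z] psiz by simp
  also have "\<dots> \<le> gf pstar \<bullet> (z - pstar) + L0 / 2 * d\<^sup>2"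
  proof -
    have "f0 z \<le> f0 pstar + gf pstar \<bullet> (z - pstar) + L0 / 2 * (norm (z - pstar))\<^sup>2"
      using gf by blast
    thus ?thesis unfolding d_def by simp
  qed
  also have "\<dots> \<le> G * d + L0 / 2 * d\<^sup>2"
    unfolding G_def d_def using norm_cauchy_schwarz by simp
  finally have main: "\<rho> * (\<beta> * d\<^sup>2) \<le> G * d + L0 / 2 * d\<^sup>2" .
  have rb: "\<rho> * \<beta> > L0" using rho_large A4(2) by (simp add: pos_divide_less_eq)
  have G_nn: "G \<ge> 0" unfolding G_def by simp
  have dG: "\<rho> * \<beta> / 2 * d \<le> G"
  proof (cases "d = 0")
    case True thus ?thesis using G_nn by simp
  next
    case False
    hence dp: "d > 0" using d_nn by simp
    have "(\<rho> * \<beta> / 2) * d\<^sup>2 \<le> (\<rho> * \<beta> - L0 / 2) * d\<^sup>2"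
      using rb by (intro mult_right_mono) (auto simp: mult.commute)
    also have "\<dots> \<le> G * d" using main by (simp add: algebra_simps)
    finally have "(\<rho> * \<beta> / 2 * d) * d \<le> G * d" by (simp add: power2_eq_square mult.assoc)
    thus ?thesis using dp by simp
  qed
  have rbpos: "\<rho> * \<beta> > 0" using rho_pos A4(2) by simp
  have "(\<rho> * \<beta> / 2 * d)\<^sup>2 \<le> G\<^sup>2"
    using dG d_nn rbpos by (intro power_mono) auto
  hence e1: "(\<rho> * \<beta> / 2 * d)\<^sup>2 \<le> 2 * L0 * (\<rho> * \<psi> pu)" using G2' by linarith
  have "(\<rho> * \<beta> / 2 * d)\<^sup>2 = \<rho> * (d\<^sup>2 * (\<rho> * \<beta>\<^sup>2)) / 4"
    by (simp add: power2_eq_square)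
  moreover have "\<rho> * (8 * L0 * \<psi> pu) = 4 * (2 * L0 * (\<rho> * \<psi> pu))" by simp
  ultimately have "\<rho> * (d\<^sup>2 * (\<rho> * \<beta>\<^sup>2)) \<le> \<rho> * (8 * L0 * \<psi> pu)" using e1 by linarith
  hence "d\<^sup>2 * (\<rho> * \<beta>\<^sup>2) \<le> 8 * L0 * \<psi> pu" using rho_pos by simp
  hence d2: "d\<^sup>2 \<le> 8 * L0 * \<psi> pu / (\<rho> * \<beta>\<^sup>2)"
    using rbpos rho_pos A4(2) by (simp add: pos_le_divide_eq)
  have s1: "(sqrt \<rho>)\<^sup>2 = \<rho>" using rho_pos by simp
  have s2: "(sqrt (2 / \<mu>0 * \<psi> pu))\<^sup>2 = 2 / \<mu>0 * \<psi> pu" using A3(1) psi_nn[of pu] by simp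
  have K2: "K\<^sup>2 = (2 * L0 / \<beta>)\<^sup>2 * (2 / \<mu>0 * \<psi> pu) / \<rho>"
    unfolding K_def \<kappa>_def by (simp only: power_divide power_mult_distrib s1 s2)
  also have "\<dots> = 8 * L0\<^sup>2 * \<psi> pu / (\<mu>0 * \<rho> * \<beta>\<^sup>2)"
    by (simp add: power_divide power_mult_distrib ac_simps)
  finally have K2: "K\<^sup>2 = 8 * L0\<^sup>2 * \<psi> pu / (\<mu>0 * \<rho> * \<beta>\<^sup>2)" .
  have "8 * L0 * \<psi> pu / (\<rho> * \<beta>\<^sup>2) = (8 * L0 * \<psi> pu * \<mu>0) / (\<mu>0 * \<rho> * \<beta>\<^sup>2)"
    using A3(1) by simp
  also have "\<dots> \<le> 8 * L0\<^sup>2 * \<psi> pu / (\<mu>0 * \<rho> * \<beta>\<^sup>2)"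
  proof (rule divide_right_mono)
    have "(8 * L0 * \<psi> pu) * \<mu>0 \<le> (8 * L0 * \<psi> pu) * L0"
      using muL L0pos psi_nn[of pu] by (intro mult_left_mono) auto
    thus "8 * L0 * \<psi> pu * \<mu>0 \<le> 8 * L0\<^sup>2 * \<psi> pu" by (simp add: power2_eq_square ac_simps)
    show "0 \<le> \<mu>0 * \<rho> * \<beta>\<^sup>2" using A3(1) rho_pos by simp
  qed
  finally have "d\<^sup>2 \<le> K\<^sup>2" using d2 K2 by simp
  hence dK: "d \<le> K" using K_nn d_nn by (simp add: power2_le_iff_abs_le)
  have part1: "\<forall>p. \<psi> p \<le> Lpsi / 2 * (norm (p - pstar) + K)\<^sup>2"
  proof
    fix p
    have "norm (p - z) \<le> norm (p - pstar) + d"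
      unfolding d_def using norm_triangle_ineq[of "p - pstar" "pstar - z"]
      by (simp add: norm_minus_commute)
    also have "\<dots> \<le> norm (p - pstar) + K" using dK by simp
    finally have "(norm (p - z))\<^sup>2 \<le> (norm (p - pstar) + K)\<^sup>2"
      by (intro power_mono) auto
    hence "Lpsi / 2 * (norm (p - z))\<^sup>2 \<le> Lpsi / 2 * (norm (p - pstar) + K)\<^sup>2"
      using A2(2) by (intro mult_left_mono) auto
    thus "\<psi> p \<le> Lpsi / 2 * (norm (p - pstar) + K)\<^sup>2"
      using psi_bound[of p] by linarith
  qed
  have "\<psi> pstar \<le> Lpsi / 2 * K\<^sup>2" using part1[rule_format, of pstar] by simp
  also have "\<dots> = Lpsi * \<kappa>\<^sup>2 / (2 * \<rho>)"
    unfolding K_def using rho_pos by (simp add: power_divide)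
  finally show ?thesis using part1 unfolding K_def \<kappa>_def by simp
qed

end
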